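(* Let $m,n,k$ be positive integers, $A\in\mathbb{R}^{m\times n}$, $x^*\in\mathbb{R}^n$ with support $S^*$ satisfying $1\le|S^*|\le k$, $e\in\mathbb{R}^m$, $y=Ax^*+e$. For every initialization $\mathcal{X}^0\in\mathbb{R}^n$ and every $\eta>0$, consider the Support Exploration Algorithm using the Oracle Update Rule. Then there exists an integer $$t_s\le k\left(1+\frac{2\|\mathcal{X}^0\|_\infty}{\eta\min_{i\in S^*}|x^*_i|}\right)$$ such that $S^*\subseteq S^{t_s}$. Moreover $u^{t_s}=0$ and the algorithm returns a vector in $\arg\min\{\|Ax-y\|_2^2: x\in\mathbb{R}^n,\ \mathrm{supp}(x)\subseteq S^{t_s}\}$.
   Context: $S^*=\{i:x^*_i\neq0\}$. For $v\in\mathbb{R}^n$, $\mathrm{largest}_k(v)$ is the set of indices of the $k$ entries of $v$ with largest absolute value (ties broken by selecting the highest indices). For $S\subseteq\{1,\dots,n\}$, $A_S$ is the submatrix of columns indexed by $S$ and $A_S^\dagger$ its Moore–Penrose pseudoinverse. The Support Exploration Algorithm using the Oracle Update Rule, with inputs $x^*,S^*,k,\eta,y,A$ and initialization $\mathcal{X}^0$, iterates for $t=0,1,2,\dots$: $S^t=\mathrm{largest}_k(\mathcal{X}^t)$; $u^t\in\mathbb{R}^n$ with $u^t_i=-\eta x^*_i$ if $i\in S^*\setminus S^t$ and $u^t_i=0$ otherwise; $\mathcal{X}^{t+1}=\mathcal{X}^t-u^t$; it stops at the first $t$ such that $u^t=0$ and then returns $x$ with $x_i=0$ for $i\notin S^t$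 and $x_{S^t}=A_{S^t}^\dagger y$. *)

theory Defs
  imports "Jordan_Normal_Form.Matrix"
begin

text \<open>Vectors in R^n are Jordan_Normal_Form vectors of dimension n, indexed 0..n-1;
  matrices in R^(m x n) are JNF matrices with m rows and n columns.\<close>

definition supp_vec :: "real vec \<Rightarrow> nat set" where
  "supp_vec x = {i. i < dim_vec x \<and> x $ i \<noteq> 0}"

definition norm_inf_vec :: "real vec \<Rightarrow> real" where
  "norm_inf_vec x = Max (insert 0 {\<bar>x $ i\<bar> | i. i < dim_vec x})"

text \<open>largest_k(v): indices of the k entries of largest absolute value, ties broken
  by selecting the highest indices.\<close>

definition beats :: "real vec \<Rightarrow> nat \<Rightarrow> nat \<Rightarrow> bool" where
  "beats v j i \<longleftrightarrow> \<bar>v $ j\<bar> > \<bar>v $ i\<bar> \<or> (\<bar>v $ j\<bar> = \<bar>v $ i\<bar> \<and> j > i)"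

definition largest :: "nat \<Rightarrow> real vec \<Rightarrow> nat set" where
  "largest k v = {i. i < dim_vec v \<and> card {j. j < dim_vec v \<and> beats v j i} < k}"

definition col_submat :: "real mat \<Rightarrow> nat set \<Rightarrow> real mat" where
  "col_submat A S = mat (dim_row A) (card S) (\<lambda>(i, j). A $$ (i, sorted_list_of_set S ! j))"

definition pinv :: "real mat \<Rightarrow> real mat" where
  "pinv M = (THE B. B \<in> carrier_mat (dim_col M) (dim_row M) \<and>
      M * B * M = M \<and> B * M * B = B \<and>
      transpose_mat (M * B) = M * B \<and> transpose_mat (B * M) = B * M)"

definition oracle_u :: "real vec \<Rightarrow> nat set \<Rightarrow> nat \<Rightarrow> real \<Rightarrow> real vec \<Rightarrow> real vec" where
  "oracle_u xs Ss k \<eta> X = vec (dim_vec xs)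
     (\<lambda>i. if i \<in> Ss \<and> i \<notin> largest k X then - \<eta> * xs $ i else 0)"

primrec sea_X :: "real vec \<Rightarrow> nat set \<Rightarrow> nat \<Rightarrow> real \<Rightarrow> real vec \<Rightarrow> nat \<Rightarrow> real vec" where
  "sea_X xs Ss k \<eta> X0 0 = X0"
| "sea_X xs Ss k \<eta> X0 (Suc t) =
     sea_X xs Ss k \<eta> X0 t - oracle_u xs Ss k \<eta> (sea_X xs Ss k \<eta> X0 t)"

definition sea_S :: "real vec \<Rightarrow> nat set \<Rightarrow> nat \<Rightarrow> real \<Rightarrow> real vec \<Rightarrow> nat \<Rightarrow> nat set" where
  "sea_S xs Ss k \<eta> X0 t = largest k (sea_X xs Ss k \<eta> X0 t)"

definition sea_u :: "real vec \<Rightarrow> nat set \<Rightarrow> nat \<Rightarrow> real \<Rightarrow> real vec \<Rightarrow> nat \<Rightarrow> real vec" where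
  "sea_u xs Ss k \<eta> X0 t = oracle_u xs Ss k \<eta> (sea_X xs Ss k \<eta> X0 t)"

definition pinv_sol :: "real mat \<Rightarrow> real vec \<Rightarrow> nat set \<Rightarrow> real vec" where
  "pinv_sol A y S = (let z = pinv (col_submat A S) *\<^sub>v y in
     vec (dim_col A) (\<lambda>i. if i \<in> S then z $ (THE j. j < card S \<and> sorted_list_of_set S ! j = i) else 0))"

definition sea_output :: "real vec \<Rightarrow> nat set \<Rightarrow> nat \<Rightarrow> real \<Rightarrow> real vec \<Rightarrow> real mat \<Rightarrow> real vec \<Rightarrow> real vec" where
  "sea_output xs Ss k \<eta> y A X0 =
     pinv_sol A y (sea_S xs Ss k \<eta> X0 (LEAST t. sea_u xs Ss k \<eta> X0 t = 0\<^sub>v (dim_vec xs)))"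

definition sq_resid :: "real mat \<Rightarrow> real vec \<Rightarrow> real vec \<Rightarrow> real" where
  "sq_resid A y x = (A *\<^sub>v x - y) \<bullet> (A *\<^sub>v x - y)"

definition ls_argmin :: "real mat \<Rightarrow> real vec \<Rightarrow> nat set \<Rightarrow> real vec set" where
  "ls_argmin A y S = {x \<in> carrier_vec (dim_col A). supp_vec x \<subseteq> S \<and>
     (\<forall>z \<in> carrier_vec (dim_col A). supp_vec z \<subseteq> S \<longrightarrow> sq_resid A y x \<le> sq_resid A y z)}"

end

theory Submission
  imports Defs "Jordan_Normal_Form.Determinant"
begin

lemma sum_sorted_list:
  assumes "finite J"
  shows "(\<Sum>k<card J. f (sorted_list_of_set J ! k)) = (\<Sum>i\<in>J. f i)"
proof -
  have b: "bij_betw ((!) (sorted_list_of_set J)) {..<card J} J"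
    by (rule bij_betw_nth) (use assms in auto)
  show ?thesis using sum.reindex_bij_betw[OF b, of f] by simp
qed

definition idx :: "nat set \<Rightarrow> nat \<Rightarrow> nat" where
  "idx S i = (THE j. j < card S \<and> sorted_list_of_set S ! j = i)"

lemma idx_nth:
  assumes "finite J" "k < card J"
  shows "idx J (sorted_list_of_set J ! k) = k"
  unfolding idx_def
proof (rule the_equality)
  show "k < card J \<and> sorted_list_of_set J ! k = sorted_list_of_set J ! k" using assms by simp
  fix j assume "j < card J \<and> sorted_list_of_set J ! j = sorted_list_of_set J ! k"
  then show "j = k" using assms nth_eq_iff_index_eq[of "sorted_list_of_set J" j k] by auto
qed

lemma nth_sorted_in:
  assumes "finite J" "k < card J"
  shows "sorted_list_of_set J ! k \<in> J"
  using assms by (metis length_sorted_list_of_set nth_mem set_sorted_list_of_set)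

definition penrose :: "real mat \<Rightarrow> real mat \<Rightarrow> bool" where
  "penrose M B \<longleftrightarrow> B \<in> carrier_mat (dim_col M) (dim_row M) \<and>
      M * B * M = M \<and> B * M * B = B \<and>
      transpose_mat (M * B) = M * B \<and> transpose_mat (B * M) = B * M"

lemma sym_proj_eq1:
  fixes P1 P2 :: "real mat"
  assumes c: "P1 \<in> carrier_mat n n" "P2 \<in> carrier_mat n n"
    and s: "transpose_mat P1 = P1" "transpose_mat P2 = P2"
    and e: "P2 * P1 = P1" "P1 * P2 = P2"
  shows "P1 = P2"
proof -
  have "P1 = transpose_mat (P2 * P1)" using s e by simp
  also have "\<dots> = transpose_mat P1 * transpose_mat P2" using transpose_mult[OF c(2) c(1)] .
  also have "\<dots> = P2" using s e by simp
  finally show ?thesis .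
qed

lemma sym_proj_eq2:
  fixes P1 P2 :: "real mat"
  assumes c: "P1 \<in> carrier_mat n n" "P2 \<in> carrier_mat n n"
    and s: "transpose_mat P1 = P1" "transpose_mat P2 = P2"
    and e: "P1 * P2 = P1" "P2 * P1 = P2"
  shows "P1 = P2"
proof -
  have "P1 = transpose_mat (P1 * P2)" using s e by simp
  also have "\<dots> = transpose_mat P2 * transpose_mat P1" using transpose_mult[OF c(1) c(2)] .
  also have "\<dots> = P2" using s e by simp
  finally show ?thesis .
qed

lemma pinv_unique:
  assumes M: "M \<in> carrier_mat m s" and p1: "penrose M B1" and p2: "penrose M B2"
  shows "B1 = B2"
proof -
  have c1: "B1 \<in> carrier_mat s m" and c2: "B2 \<in> carrier_mat s m" using p1 p2 M unfolding penrose_def by auto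
  have MB: "M * B1 = M * B2"
  proof (rule sym_proj_eq1[of _ m])
    show "M * B1 \<in> carrier_mat m m" "M * B2 \<in> carrier_mat m m" using M c1 c2 by auto
    show "transpose_mat (M * B1) = M * B1" "transpose_mat (M * B2) = M * B2" using p1 p2 unfolding penrose_def by auto
    have "M * B2 * (M * B1) = (M * B2 * M) * B1"
      using assoc_mult_mat[OF mult_carrier_mat[OF M c2] M c1] by simp
    then show "M * B2 * (M * B1) = M * B1" using p2 unfolding penrose_def by simp
    have "M * B1 * (M * B2) = (M * B1 * M) * B2"
      using assoc_mult_mat[OF mult_carrier_mat[OF M c1] M c2] by simp
    then show "M * B1 * (M * B2) = M * B2" using p1 unfolding penrose_def by simp
  qed
  have BM: "B1 * M = B2 * M"
  proof (rule sym_proj_eq2[of _ s])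
    show "B1 * M \<in> carrier_mat s s" "B2 * M \<in> carrier_mat s s" using M c1 c2 by auto
    show "transpose_mat (B1 * M) = B1 * M" "transpose_mat (B2 * M) = B2 * M" using p1 p2 unfolding penrose_def by auto
    have "B1 * M * (B2 * M) = B1 * (M * B2 * M)"
      using assoc_mult_mat[OF c1 M mult_carrier_mat[OF c2 M]] assoc_mult_mat[OF M c2 M] by simp
    then show "B1 * M * (B2 * M) = B1 * M" using p2 unfolding penrose_def by simp
    have "B2 * M * (B1 * M) = B2 * (M * B1 * M)"
      using assoc_mult_mat[OF c2 M mult_carrier_mat[OF c1 M]] assoc_mult_mat[OF M c1 M] by simp
    then show "B2 * M * (B1 * M) = B2 * M" using p1 unfolding penrose_def by simp
  qed
  have "B1 = B1 * M * B1" using p1 unfolding penrose_def by simp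
  also have "\<dots> = B1 * (M * B1)" using assoc_mult_mat[OF c1 M c1] .
  also have "\<dots> = B1 * M * B2" using MB assoc_mult_mat[OF c1 M c2] by simp
  also have "\<dots> = B2 * M * B2" using BM by simp
  also have "\<dots> = B2" using p2 unfolding penrose_def by simp
  finally show ?thesis .
qed


lemma assoc_dim:
  "dim_col A = dim_row B \<Longrightarrow> dim_col B = dim_row C \<Longrightarrow> (A * B) * C = A * (B * (C :: 'a :: semiring_0 mat))"
  by (rule assoc_mult_mat[of A "dim_row A" "dim_col A" B "dim_col B" C "dim_col C"]) auto

lemma transpose_mult_dim:
  "dim_col A = dim_row B \<Longrightarrow> transpose_mat (A * B) = transpose_mat B * transpose_mat (A :: 'a :: comm_semiring_0 mat)"
  by (rule transpose_mult[of A "dim_row A" "dim_col A" B "dim_col B"]) auto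

lemma self_scalar_zero:
  fixes v :: "real vec"
  assumes "v \<bullet> v = 0"
  shows "v = 0\<^sub>v (dim_vec v)"
proof -
  have "(\<Sum>i\<in>{0..<dim_vec v}. v $ i * v $ i) = 0" using assms unfolding scalar_prod_def by simp
  then have "\<forall>i\<in>{0..<dim_vec v}. v $ i * v $ i = 0"
    by (subst sum_nonneg_eq_0_iff[symmetric]) auto
  then show ?thesis by (intro eq_vecI) auto
qed

lemma gram_kernel:
  fixes F :: "real mat"
  assumes F: "F \<in> carrier_mat a b" and x: "x \<in> carrier_vec b"
    and z: "(transpose_mat F * F) *\<^sub>v x = 0\<^sub>v b"
  shows "F *\<^sub>v x = 0\<^sub>v a"
proof -
  have Fx: "F *\<^sub>v x \<in> carrier_vec a" using F x by auto
  have "(transpose_mat F * F) *\<^sub>v x = transpose_mat F *\<^sub>v (F *\<^sub>v x)"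
    using F x by (simp add: assoc_mult_mat_vec[of _ b a])
  then have "0 = (transpose_mat F *\<^sub>v (F *\<^sub>v x)) \<bullet> x" using z x by (metis scalar_prod_left_zero)
  also have "\<dots> = (F *\<^sub>v x) \<bullet> (F *\<^sub>v x)" by (rule transpose_vec_mult_scalar[OF F x Fx])
  finally have "F *\<^sub>v x = 0\<^sub>v (dim_vec (F *\<^sub>v x))" using self_scalar_zero by metis
  then show ?thesis using F by simp
qed

lemma inv_sym:
  fixes C :: "real mat"
  assumes C: "C \<in> carrier_mat n n" and s: "transpose_mat C = C"
    and k: "\<And>x. x \<in> carrier_vec n \<Longrightarrow> C *\<^sub>v x = 0\<^sub>v n \<Longrightarrow> x = 0\<^sub>v n"
  shows "\<exists>H \<in> carrier_mat n n. C * H = 1\<^sub>m n \<and> H * C = 1\<^sub>m n \<and> transpose_mat H = H"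
proof -
  have d: "det C \<noteq> 0" using det_0_iff_vec_prod_zero[OF C] k by auto
  define H where "H = (1 / det C) \<cdot>\<^sub>m adj_mat C"
  have Hc: "H \<in> carrier_mat n n" unfolding H_def using adj_mat(1)[OF C] by simp
  have CH: "C * H = 1\<^sub>m n"
    unfolding H_def using mult_smult_distrib[OF C adj_mat(1)[OF C]] adj_mat(2)[OF C] d
    by (auto intro!: eq_matI)
  have HC: "H * C = 1\<^sub>m n"
    unfolding H_def using mult_smult_assoc_mat[OF adj_mat(1)[OF C] C] adj_mat(3)[OF C] d
    by (auto intro!: eq_matI)
  have "transpose_mat (C * H) = 1\<^sub>m n" using CH by simp
  then have HtC: "transpose_mat H * C = 1\<^sub>m n" using transpose_mult[OF C Hc] s by simp
  have "transpose_mat H = transpose_mat H * (C * H)" using CH Hc by simp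
  also have "\<dots> = (transpose_mat H * C) * H" using Hc C by (simp add: assoc_mult_mat[of _ n n])
  also have "\<dots> = H" using HtC Hc by simp
  finally show ?thesis using Hc CH HC by blast
qed


lemma pinv_exists:
  fixes M :: "real mat"
  assumes M: "M \<in> carrier_mat m s"
  shows "\<exists>B. penrose M B"
proof -
  define lc where "lc J c = vec m (\<lambda>r. \<Sum>i\<in>J. c i * M $$ (r, i))" for J and c :: "nat \<Rightarrow> real"
  define ind where "ind J \<longleftrightarrow> J \<subseteq> {..<s} \<and> (\<forall>c. lc J c = 0\<^sub>v m \<longrightarrow> (\<forall>i\<in>J. c i = 0))" for J
  have ind0: "ind {}" unfolding ind_def by simp
  have fin: "finite {J. ind J}" by (rule finite_subset[of _ "Pow {..<s}"]) (auto simp: ind_def)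
  define N where "N = Max (card ` {J. ind J})"
  have "N \<in> card ` {J. ind J}" unfolding N_def using fin ind0 by (intro Max_in) auto
  then obtain J where indJ: "ind J" and cJ: "card J = N" by auto
  have maxJ: "card J' \<le> card J" if "ind J'" for J' unfolding cJ N_def using fin that by (intro Max_ge) auto
  have Js: "J \<subseteq> {..<s}" using indJ unfolding ind_def by auto
  have finJ: "finite J" using Js finite_subset by blast
  have span: "\<exists>g. \<forall>r<m. M $$ (r, j) = (\<Sum>i\<in>J. g i * M $$ (r, i))" if j: "j < s" "j \<notin> J" for j
  proof -
    have "card (insert j J) > card J" using finJ j by simp
    then have "\<not> ind (insert j J)" using maxJ by force
    moreover have "insert j J \<subseteq> {..<s}" using Js j by auto
    ultimately obtain c where c0: "lc (insert j J) c = 0\<^sub>v m" and ci: "\<exists>i\<in>insert j J. c i \<noteq> 0"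
      unfolding ind_def by blast
    have sumeq: "c j * M $$ (r, j) + (\<Sum>i\<in>J. c i * M $$ (r, i)) = 0" if "r < m" for r
    proof -
      have "lc (insert j J) c $ r = 0" using c0 that by simp
      then show ?thesis unfolding lc_def using that finJ j by simp
    qed
    have cj: "c j \<noteq> 0"
    proof
      assume cj0: "c j = 0"
      have "lc J c = 0\<^sub>v m" unfolding lc_def using sumeq cj0 by (intro eq_vecI) auto
      then have "\<forall>i\<in>J. c i = 0" using indJ unfolding ind_def by blast
      then show False using ci cj0 by auto
    qed
    show ?thesis
    proof (intro exI allI impI)
      fix r assume r: "r < m"
      have "M $$ (r, j) = - (\<Sum>i\<in>J. c i * M $$ (r, i)) / c j" using sumeq[OF r] cj by (simp add: field_simps)
      also have "\<dots> = (\<Sum>i\<in>J. (- c i / c j) * M $$ (r, i))"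
        by (simp add: sum_divide_distrib sum_negf)
      finally show "M $$ (r, j) = (\<Sum>i\<in>J. (- c i / c j) * M $$ (r, i))" .
    qed
  qed
  define g where "g j = (if j \<in> J then (\<lambda>i. if i = j then 1 else 0)
      else (SOME g. \<forall>r<m. M $$ (r, j) = (\<Sum>i\<in>J. g i * M $$ (r, i))))" for j :: nat
  have gprop: "M $$ (r, j) = (\<Sum>i\<in>J. g j i * M $$ (r, i))" if "j < s" "r < m" for j r
  proof (cases "j \<in> J")
    case True
    have "(\<Sum>i\<in>J. g j i * M $$ (r, i)) = (\<Sum>i\<in>J. if i = j then M $$ (r, i) else 0)"
      unfolding g_def using True by (intro sum.cong) auto
    also have "\<dots> = M $$ (r, j)" using True finJ by simp
    finally show ?thesis by simp
  next
    case False
    show ?thesis unfolding g_def using False someI_ex[OF span[OF that(1) False]] that(2) by auto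
  qed
  define L where "L = sorted_list_of_set J"
  define r0 where "r0 = card J"
  have LJ: "L ! k \<in> J" if "k < r0" for k unfolding L_def using nth_sorted_in[OF finJ] that r0_def by simp
  have Ls: "L ! k < s" if "k < r0" for k using LJ[OF that] Js by auto
  have Ldist: "L ! k = L ! k' \<longleftrightarrow> k = k'" if "k < r0" "k' < r0" for k k'
    unfolding L_def using that r0_def finJ by (simp add: nth_eq_iff_index_eq)
  define F where "F = col_submat M J"
  have Fc: "F \<in> carrier_mat m r0" unfolding F_def col_submat_def r0_def using M by simp
  have Fe: "F $$ (a, k) = M $$ (a, L ! k)" if "a < m" "k < r0" for a k
    unfolding F_def col_submat_def L_def using that M r0_def by simp
  define G where "G = mat r0 s (\<lambda>(k, j). g j (L ! k))"
  have Gc: "G \<in> carrier_mat r0 s" unfolding G_def by simp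
  have FG: "F * G = M"
  proof (rule eq_matI)
    fix a j assume a: "a < dim_row M" and j: "j < dim_col M"
    have "(F * G) $$ (a, j) = (\<Sum>k\<in>{0..<r0}. F $$ (a, k) * G $$ (k, j))"
      using a j Fc Gc M by (simp add: scalar_prod_def)
    also have "\<dots> = (\<Sum>k<r0. M $$ (a, L ! k) * g j (L ! k))"
      using a j M by (intro sum.cong) (auto simp: Fe G_def)
    also have "\<dots> = (\<Sum>i\<in>J. M $$ (a, i) * g j i)"
      unfolding L_def r0_def by (rule sum_sorted_list[OF finJ, where f = "\<lambda>i. M $$ (a, i) * g j i"])
    also have "\<dots> = M $$ (a, j)" using gprop[of j a] a j M by (simp add: mult.commute)
    finally show "(F * G) $$ (a, j) = M $$ (a, j)" .
  qed (use Fc Gc M in auto)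
  have k1: "x = 0\<^sub>v r0" if x: "x \<in> carrier_vec r0" and z: "(transpose_mat F * F) *\<^sub>v x = 0\<^sub>v r0" for x
  proof -
    have Fx: "F *\<^sub>v x = 0\<^sub>v m" by (rule gram_kernel[OF Fc x z])
    define c where "c i = x $ idx J i" for i
    have "lc J c = 0\<^sub>v m"
    proof (rule eq_vecI)
      fix a assume a: "a < dim_vec (0\<^sub>v m :: real vec)"
      have "lc J c $ a = (\<Sum>i\<in>J. c i * M $$ (a, i))" unfolding lc_def using a by simp
      also have "\<dots> = (\<Sum>k<r0. c (L ! k) * M $$ (a, L ! k))"
        unfolding L_def r0_def by (rule sum_sorted_list[OF finJ, symmetric])
      also have "\<dots> = (\<Sum>k\<in>{0..<r0}. F $$ (a, k) * x $ k)"
        using a by (intro sum.cong) (auto simp: c_def idx_nth[OF finJ] L_def r0_def Fe[unfolded L_def])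
      also have "\<dots> = (F *\<^sub>v x) $ a" using a Fc x by (simp add: scalar_prod_def)
      finally show "lc J c $ a = (0\<^sub>v m :: real vec) $ a" using Fx a by simp
    qed (simp add: lc_def)
    then have "\<forall>i\<in>J. c i = 0" using indJ unfolding ind_def by blast
    then have "x $ i = 0" if "i < r0" for i
    proof -
      have "c (L ! i) = 0" using LJ[OF that] \<open>\<forall>i\<in>J. c i = 0\<close> by blast
      then show ?thesis unfolding c_def L_def using idx_nth[OF finJ, of i] that r0_def by simp
    qed
    then show ?thesis using x by (intro eq_vecI) auto
  qed
  have k2: "x = 0\<^sub>v r0" if x: "x \<in> carrier_vec r0" and z: "(G * transpose_mat G) *\<^sub>v x = 0\<^sub>v r0" for x
  proof -
    have Gtc: "transpose_mat G \<in> carrier_mat s r0" using Gc by simp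
    have Gx: "transpose_mat G *\<^sub>v x = 0\<^sub>v s" by (rule gram_kernel[OF Gtc x]) (use z in simp)
    show ?thesis
    proof (rule eq_vecI)
      fix k0 assume k0: "k0 < dim_vec (0\<^sub>v r0 :: real vec)"
      then have k0': "k0 < r0" by simp
      have "(transpose_mat G *\<^sub>v x) $ (L ! k0) = (\<Sum>k\<in>{0..<r0}. G $$ (k, L ! k0) * x $ k)"
        using Ls[OF k0'] Gc x by (simp add: scalar_prod_def)
      also have "\<dots> = (\<Sum>k\<in>{0..<r0}. if k = k0 then x $ k else 0)"
        using Ls[OF k0'] LJ[OF k0'] Ldist k0' by (intro sum.cong) (auto simp: G_def g_def)
      also have "\<dots> = x $ k0" using k0' by simp
      finally show "x $ k0 = (0\<^sub>v r0 :: real vec) $ k0" using Gx Ls[OF k0'] k0' by simp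
    qed (use x in simp)
  qed
  have C1c: "transpose_mat F * F \<in> carrier_mat r0 r0" using Fc by simp
  have C1s: "transpose_mat (transpose_mat F * F) = transpose_mat F * F"
    using Fc by (simp add: transpose_mult_dim)
  obtain H1 where H1c: "H1 \<in> carrier_mat r0 r0" and H1a: "(transpose_mat F * F) * H1 = 1\<^sub>m r0"
    and H1b: "H1 * (transpose_mat F * F) = 1\<^sub>m r0" and H1t: "transpose_mat H1 = H1"
    using inv_sym[OF C1c C1s k1] by blast
  have C2c: "G * transpose_mat G \<in> carrier_mat r0 r0" using Gc by simp
  have C2s: "transpose_mat (G * transpose_mat G) = G * transpose_mat G"
    using Gc by (simp add: transpose_mult_dim)
  obtain H2 where H2c: "H2 \<in> carrier_mat r0 r0" and H2a: "(G * transpose_mat G) * H2 = 1\<^sub>m r0"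
    and H2b: "H2 * (G * transpose_mat G) = 1\<^sub>m r0" and H2t: "transpose_mat H2 = H2"
    using inv_sym[OF C2c C2s k2] by blast
  have dims: "dim_row F = m" "dim_col F = r0" "dim_row G = r0" "dim_col G = s"
    "dim_row H1 = r0" "dim_col H1 = r0" "dim_row H2 = r0" "dim_col H2 = r0"
    using Fc Gc H1c H2c by auto
  have R1: "H1 * (transpose_mat F * (F * Y)) = Y" if "dim_row Y = r0" for Y
  proof -
    have "H1 * (transpose_mat F * (F * Y)) = (H1 * (transpose_mat F * F)) * Y"
      using that dims by (simp add: assoc_dim)
    then show ?thesis using H1b that by simp
  qed
  have R2: "G * (transpose_mat G * (H2 * Y)) = Y" if "dim_row Y = r0" for Y
  proof -
    have "G * (transpose_mat G * (H2 * Y)) = ((G * transpose_mat G) * H2) * Y"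
      using that dims by (simp add: assoc_dim)
    then show ?thesis using H2a that by simp
  qed
  define B where "B = transpose_mat G * H2 * H1 * transpose_mat F"
  have Bc: "B \<in> carrier_mat s m" unfolding B_def using Gc H1c H2c Fc by auto
  have "M * B * M = M \<and> B * M * B = B \<and>
      transpose_mat (M * B) = M * B \<and> transpose_mat (B * M) = B * M"
    unfolding FG[symmetric] B_def
    by (simp add: assoc_dim dims R1 R2 transpose_mult_dim H1t H2t)
  then have "penrose M B" unfolding penrose_def using Bc M by simp
  then show ?thesis by blast
qed


lemma pinv_penrose:
  assumes M: "M \<in> carrier_mat m s"
  shows "penrose M (pinv M)"
proof -
  obtain B0 where B0: "penrose M B0" using pinv_exists[OF M] by blast
  have ex1: "\<exists>!B. penrose M B"
  proof (rule ex1I[of _ B0])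
    show "penrose M B0" by (rule B0)
    fix B assume "penrose M B"
    then show "B = B0" using pinv_unique[OF M _ B0] by simp
  qed
  have "pinv M = (THE B. penrose M B)" unfolding pinv_def penrose_def by (rule refl)
  then show ?thesis using theI'[OF ex1] by simp
qed

lemma self_scalar_nonneg: "(v :: real vec) \<bullet> v \<ge> 0"
  unfolding scalar_prod_def by (intro sum_nonneg) auto

lemma ls_opt:
  fixes M :: "real mat"
  assumes M: "M \<in> carrier_mat m s" and y: "y \<in> carrier_vec m" and w: "w \<in> carrier_vec s"
  shows "(M *\<^sub>v (pinv M *\<^sub>v y) - y) \<bullet> (M *\<^sub>v (pinv M *\<^sub>v y) - y) \<le> (M *\<^sub>v w - y) \<bullet> (M *\<^sub>v w - y)"
proof -
  define B where "B = pinv M"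
  have p: "penrose M B" unfolding B_def by (rule pinv_penrose[OF M])
  have Bc: "B \<in> carrier_mat s m" using p M unfolding penrose_def by simp
  define z where "z = B *\<^sub>v y"
  have zc: "z \<in> carrier_vec s" unfolding z_def by (rule mult_mat_vec_carrier[OF Bc y])
  define a where "a = M *\<^sub>v (w - z)"
  define b where "b = M *\<^sub>v z - y"
  have wz: "w - z \<in> carrier_vec s" using minus_carrier_vec[of w s z] w zc by blast
  have ac: "a \<in> carrier_vec m" unfolding a_def by (rule mult_mat_vec_carrier[OF M wz])
  have Mwz: "M *\<^sub>v (w - z) = M *\<^sub>v w - M *\<^sub>v z" using mult_minus_distrib_mat_vec[OF M w zc] .
  have Mw: "M *\<^sub>v w \<in> carrier_vec m" by (rule mult_mat_vec_carrier[OF M w])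
  have Mz: "M *\<^sub>v z \<in> carrier_vec m" by (rule mult_mat_vec_carrier[OF M zc])
  have bc: "b \<in> carrier_vec m" unfolding b_def using minus_carrier_vec[of "M *\<^sub>v z" m y] Mz y by blast
  have split: "M *\<^sub>v w - y = a + b"
  proof (rule eq_vecI)
    fix i assume "i < dim_vec (a + b)"
    then have i: "i < m" using bc by simp
    show "(M *\<^sub>v w - y) $ i = (a + b) $ i"
      unfolding a_def b_def Mwz using i carrier_vecD[OF Mw] carrier_vecD[OF Mz] carrier_vecD[OF y] by simp
  qed (use y bc in simp)
  have Mt: "transpose_mat M \<in> carrier_mat s m" using M by simp
  have MtM: "transpose_mat M * (M * B) = transpose_mat M"
  proof -
    have "transpose_mat M * (M * B) = transpose_mat M * transpose_mat (M * B)" using p unfolding penrose_def by simp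
    also have "\<dots> = transpose_mat (M * B * M)" using transpose_mult[OF mult_carrier_mat[OF M Bc] M] by simp
    also have "\<dots> = transpose_mat M" using p unfolding penrose_def by simp
    finally show ?thesis .
  qed
  have Mtb: "transpose_mat M *\<^sub>v b = 0\<^sub>v s"
  proof -
    have "transpose_mat M *\<^sub>v b = transpose_mat M *\<^sub>v (M *\<^sub>v z) - transpose_mat M *\<^sub>v y"
      unfolding b_def by (rule mult_minus_distrib_mat_vec[OF Mt Mz y])
    also have "M *\<^sub>v z = (M * B) *\<^sub>v y" unfolding z_def by (rule assoc_mult_mat_vec[OF M Bc y, symmetric])
    also have "transpose_mat M *\<^sub>v ((M * B) *\<^sub>v y) = (transpose_mat M * (M * B)) *\<^sub>v y"
      by (rule assoc_mult_mat_vec[OF Mt mult_carrier_mat[OF M Bc] y, symmetric])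
    also have "\<dots> = transpose_mat M *\<^sub>v y" by (simp only: MtM)
    also have "transpose_mat M *\<^sub>v y - transpose_mat M *\<^sub>v y = 0\<^sub>v s"
      by (rule minus_cancel_vec) (use Mt y in auto)
    finally show ?thesis .
  qed
  have ba: "b \<bullet> a = 0"
  proof -
    have "b \<bullet> a = (transpose_mat M *\<^sub>v b) \<bullet> (w - z)"
      unfolding a_def by (rule transpose_vec_mult_scalar[OF M wz bc, symmetric])
    also have "\<dots> = 0" unfolding Mtb by (rule scalar_prod_left_zero[OF wz])
    finally show ?thesis .
  qed
  have ab: "a \<bullet> b = 0" using comm_scalar_prod[OF ac bc] ba by simp
  have "(a + b) \<bullet> (a + b) = a \<bullet> (a + b) + b \<bullet> (a + b)" by (rule add_scalar_prod_distrib[OF ac bc], use ac bc in simp)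
  also have "\<dots> = (a \<bullet> a + a \<bullet> b) + (b \<bullet> a + b \<bullet> b)"
    using scalar_prod_add_distrib[OF ac ac bc] scalar_prod_add_distrib[OF bc ac bc] by simp
  also have "\<dots> = a \<bullet> a + b \<bullet> b" using ab ba by simp
  finally have e1: "(M *\<^sub>v w - y) \<bullet> (M *\<^sub>v w - y) = a \<bullet> a + b \<bullet> b" by (simp only: split)
  have e2: "M *\<^sub>v (pinv M *\<^sub>v y) - y = b" unfolding b_def z_def B_def ..
  show ?thesis unfolding e1 e2 using self_scalar_nonneg[of a] by linarith
qed


lemma restrict_eq:
  fixes A :: "real mat"
  assumes A: "A \<in> carrier_mat m n" and S: "S \<subseteq> {..<n}" and x: "x \<in> carrier_vec n"
    and sx: "supp_vec x \<subseteq> S"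
  shows "A *\<^sub>v x = col_submat A S *\<^sub>v vec (card S) (\<lambda>k. x $ (sorted_list_of_set S ! k))"
proof (rule eq_vecI)
  have finS: "finite S" using S finite_subset by blast
  fix r assume "r < dim_vec (col_submat A S *\<^sub>v vec (card S) (\<lambda>k. x $ (sorted_list_of_set S ! k)))"
  then have r: "r < m" using A unfolding col_submat_def by simp
  have "(A *\<^sub>v x) $ r = (\<Sum>i\<in>{0..<n}. A $$ (r, i) * x $ i)"
    using A x r by (simp add: scalar_prod_def)
  also have "\<dots> = (\<Sum>i\<in>S. A $$ (r, i) * x $ i)"
  proof (rule sum.mono_neutral_right)
    show "S \<subseteq> {0..<n}" using S by auto
    show "\<forall>i\<in>{0..<n} - S. A $$ (r, i) * x $ i = 0"
      using sx x unfolding supp_vec_def by auto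
  qed simp
  also have "\<dots> = (\<Sum>k<card S. A $$ (r, sorted_list_of_set S ! k) * x $ (sorted_list_of_set S ! k))"
    by (rule sum_sorted_list[OF finS, symmetric])
  also have "\<dots> = (col_submat A S *\<^sub>v vec (card S) (\<lambda>k. x $ (sorted_list_of_set S ! k))) $ r"
    using A r unfolding col_submat_def by (simp add: scalar_prod_def atLeast0LessThan)
  finally show "(A *\<^sub>v x) $ r = (col_submat A S *\<^sub>v vec (card S) (\<lambda>k. x $ (sorted_list_of_set S ! k))) $ r" .
qed (use A in \<open>simp add: col_submat_def\<close>)

lemma output_ls:
  fixes A :: "real mat"
  assumes A: "A \<in> carrier_mat m n" and y: "y \<in> carrier_vec m" and S: "S \<subseteq> {..<n}"
  shows "pinv_sol A y S \<in> ls_argmin A y S"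
proof -
  have finS: "finite S" using S finite_subset by blast
  define M where "M = col_submat A S"
  have Mc: "M \<in> carrier_mat m (card S)" unfolding M_def col_submat_def using A by simp
  define z where "z = pinv M *\<^sub>v y"
  define xh where "xh = pinv_sol A y S"
  have xh_def': "xh = vec n (\<lambda>i. if i \<in> S then z $ idx S i else 0)"
    unfolding xh_def pinv_sol_def z_def M_def idx_def Let_def using A by simp
  have xhc: "xh \<in> carrier_vec n" unfolding xh_def' by simp
  have sxh: "supp_vec xh \<subseteq> S" unfolding xh_def' supp_vec_def by (auto split: if_splits)
  have pc: "penrose M (pinv M)" by (rule pinv_penrose[OF Mc])
  have pMc: "pinv M \<in> carrier_mat (card S) m" using pc Mc unfolding penrose_def by simp
  have zc: "z \<in> carrier_vec (card S)" unfolding z_def by (rule mult_mat_vec_carrier[OF pMc y])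
  have wx: "vec (card S) (\<lambda>k. xh $ (sorted_list_of_set S ! k)) = z"
  proof (rule eq_vecI)
    fix k assume "k < dim_vec z"
    then have k: "k < card S" using zc by simp
    have "sorted_list_of_set S ! k \<in> S" by (rule nth_sorted_in[OF finS k])
    moreover then have "sorted_list_of_set S ! k < n" using S by auto
    ultimately show "vec (card S) (\<lambda>k. xh $ (sorted_list_of_set S ! k)) $ k = z $ k"
      unfolding xh_def' using k idx_nth[OF finS k] by simp
  qed (use zc in simp)
  have Axh: "A *\<^sub>v xh = M *\<^sub>v z" using restrict_eq[OF A S xhc sxh] wx unfolding M_def by simp
  have opt: "sq_resid A y xh \<le> sq_resid A y v" if v: "v \<in> carrier_vec (dim_col A)" "supp_vec v \<subseteq> S" for v
  proof -
    have vc: "v \<in> carrier_vec n" using v A by simp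
    define wv where "wv = vec (card S) (\<lambda>k. v $ (sorted_list_of_set S ! k))"
    have Av: "A *\<^sub>v v = M *\<^sub>v wv" unfolding M_def wv_def by (rule restrict_eq[OF A S vc v(2)])
    have wvc: "wv \<in> carrier_vec (card S)" unfolding wv_def by simp
    show ?thesis unfolding sq_resid_def Axh Av z_def by (rule ls_opt[OF Mc y wvc])
  qed
  show ?thesis unfolding ls_argmin_def xh_def[symmetric] using xhc sxh opt A by auto
qed


lemma dimX:
  assumes "dim_vec X0 = n" "dim_vec xs = n"
  shows "dim_vec (sea_X xs Ss k \<eta> X0 t) = n"
  using assms by (induction t) (auto simp: oracle_u_def)

lemma X_suc:
  assumes "dim_vec X0 = n" "dim_vec xs = n" "i < n"
  shows "sea_X xs Ss k \<eta> X0 (Suc t) $ i = sea_X xs Ss k \<eta> X0 t $ i +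
    (if i \<in> Ss \<and> i \<notin> largest k (sea_X xs Ss k \<eta> X0 t) then \<eta> * xs $ i else 0)"
  using assms by (auto simp: oracle_u_def)

definition cnt :: "real vec \<Rightarrow> nat set \<Rightarrow> nat \<Rightarrow> real \<Rightarrow> real vec \<Rightarrow> nat \<Rightarrow> nat \<Rightarrow> real" where
  "cnt xs Ss k \<eta> X0 i t = (\<Sum>s<t. if i \<notin> largest k (sea_X xs Ss k \<eta> X0 s) then 1 else 0)"

lemma cnt_suc:
  "cnt xs Ss k \<eta> X0 i (Suc t) = cnt xs Ss k \<eta> X0 i t +
     (if i \<notin> largest k (sea_X xs Ss k \<eta> X0 t) then 1 else 0)"
  unfolding cnt_def by simp

lemma cnt_nonneg: "cnt xs Ss k \<eta> X0 i t \<ge> 0"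
  unfolding cnt_def by (intro sum_nonneg) auto

lemma X_in:
  assumes "dim_vec X0 = n" "dim_vec xs = n" "i < n" "i \<in> Ss"
  shows "sea_X xs Ss k \<eta> X0 t $ i = X0 $ i + cnt xs Ss k \<eta> X0 i t * \<eta> * xs $ i"
proof (induction t)
  case 0 then show ?case by (simp add: cnt_def)
next
  case (Suc t) then show ?case unfolding X_suc[OF assms(1-3)] cnt_suc using assms by (simp add: algebra_simps)
qed

lemma X_out:
  assumes "dim_vec X0 = n" "dim_vec xs = n" "i < n" "i \<notin> Ss"
  shows "sea_X xs Ss k \<eta> X0 t $ i = X0 $ i"
proof (induction t)
  case 0 then show ?case by simp
next
  case (Suc t) then show ?case unfolding X_suc[OF assms(1-3)] using assms by simp
qed

lemma beaten:
  assumes dX: "dim_vec X = n" and Ss: "Ss \<subseteq> {..<n}" and ck: "card Ss \<le> k"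
    and i: "i \<in> Ss" and nl: "i \<notin> largest k X"
  shows "\<exists>j<n. j \<notin> Ss \<and> \<bar>X $ i\<bar> \<le> \<bar>X $ j\<bar>"
proof (rule ccontr)
  assume na: "\<not> ?thesis"
  define Bt where "Bt = {j. j < n \<and> beats X j i}"
  have "i < n" using i Ss by auto
  moreover have "\<not> (i < dim_vec X \<and> card {j. j < dim_vec X \<and> beats X j i} < k)"
    using nl unfolding largest_def by simp
  ultimately have "\<not> card Bt < k" using dX unfolding Bt_def by simp
  moreover have "Bt \<subseteq> Ss - {i}"
  proof
    fix j assume "j \<in> Bt"
    then have j: "j < n" "beats X j i" unfolding Bt_def by auto
    then have "j \<noteq> i" unfolding beats_def by auto
    moreover have "\<bar>X $ i\<bar> \<le> \<bar>X $ j\<bar>" using j(2) unfolding beats_def by auto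
    moreover have "j \<in> Ss" using na j(1) \<open>\<bar>X $ i\<bar> \<le> \<bar>X $ j\<bar>\<close> by blast
    ultimately show "j \<in> Ss - {i}" by blast
  qed
  moreover have "finite Ss" using finite_subset[OF Ss] by simp
  ultimately have "card Bt \<le> card (Ss - {i})" by (intro card_mono) simp_all
  also have "card (Ss - {i}) = card Ss - 1" using i \<open>finite Ss\<close> by simp
  finally have "card Bt \<le> card Ss - 1" .
  moreover have "card Ss > 0" using i \<open>finite Ss\<close> card_gt_0_iff by blast
  ultimately show False using ck \<open>\<not> card Bt < k\<close> by linarith
qed

lemma u_zero_iff:
  assumes "dim_vec xs = n" "\<eta> > 0" "Ss = supp_vec xs"
  shows "sea_u xs Ss k \<eta> X0 t = 0\<^sub>v n \<longleftrightarrow> Ss \<subseteq> largest k (sea_X xs Ss k \<eta> X0 t)"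
proof
  assume "sea_u xs Ss k \<eta> X0 t = 0\<^sub>v n"
  then have z: "\<And>i. i < n \<Longrightarrow> (if i \<in> Ss \<and> i \<notin> largest k (sea_X xs Ss k \<eta> X0 t) then - \<eta> * xs $ i else 0) = 0"
  proof -
    fix i assume i: "i < n"
    have "sea_u xs Ss k \<eta> X0 t $ i = (0\<^sub>v n :: real vec) $ i" using \<open>sea_u xs Ss k \<eta> X0 t = 0\<^sub>v n\<close> by simp
    then show "?thesis i" unfolding sea_u_def oracle_u_def using assms(1) i by simp
  qed
  show "Ss \<subseteq> largest k (sea_X xs Ss k \<eta> X0 t)"
  proof
    fix i assume i: "i \<in> Ss"
    then have "i < n" "xs $ i \<noteq> 0" using assms unfolding supp_vec_def by auto
    then show "i \<in> largest k (sea_X xs Ss k \<eta> X0 t)" using z[of i] i assms(2) by (auto split: if_splits)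
  qed
next
  assume "Ss \<subseteq> largest k (sea_X xs Ss k \<eta> X0 t)"
  then show "sea_u xs Ss k \<eta> X0 t = 0\<^sub>v n"
    unfolding sea_u_def oracle_u_def using assms(1) by (intro eq_vecI) auto
qed


theorem theoremC1:
  fixes m n k :: nat and A :: "real mat" and xs e y X0 :: "real vec" and \<eta> :: real
    and Ss :: "nat set"
  assumes "0 < m" "0 < n" "0 < k"
    and "A \<in> carrier_mat m n" "xs \<in> carrier_vec n" "e \<in> carrier_vec m"
    and "X0 \<in> carrier_vec n"
    and "Ss = supp_vec xs" "1 \<le> card Ss" "card Ss \<le> k"
    and "y = A *\<^sub>v xs + e"
    and "\<eta> > 0"
  shows "\<exists>ts::nat. real ts \<le> real k * (1 + 2 * norm_inf_vec X0 / (\<eta> * Min {\<bar>xs $ i\<bar> | i. i \<in> Ss}))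
      \<and> Ss \<subseteq> sea_S xs Ss k \<eta> X0 ts
      \<and> sea_u xs Ss k \<eta> X0 ts = 0\<^sub>v n
      \<and> sea_output xs Ss k \<eta> y A X0 \<in> ls_argmin A y (sea_S xs Ss k \<eta> X0 ts)"
proof -
  note A = assms(4) and xsc = assms(5) and X0c = assms(7) and SsD = assms(8)
    and c1 = assms(9) and ck = assms(10) and yD = assms(11) and eta = assms(12)
  have dxs: "dim_vec xs = n" and dX0: "dim_vec X0 = n" using xsc X0c by auto
  have Ssn: "Ss \<subseteq> {..<n}" unfolding SsD supp_vec_def using dxs by auto
  have finSs: "finite Ss" using finite_subset[OF Ssn] by simp
  have xsnz: "xs $ i \<noteq> 0" if "i \<in> Ss" for i using that unfolding SsD supp_vec_def by auto
  define M where "M = norm_inf_vec X0"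
  have setM: "{\<bar>X0 $ i\<bar> | i. i < dim_vec X0} = (\<lambda>i. \<bar>X0 $ i\<bar>) ` {..<dim_vec X0}" by auto
  have finM: "finite (insert 0 {\<bar>X0 $ i\<bar> | i. i < dim_vec X0})" unfolding setM by simp
  have Mge: "\<bar>X0 $ j\<bar> \<le> M" if "j < n" for j
    unfolding M_def norm_inf_vec_def using that dX0 by (intro Max_ge[OF finM]) auto
  have M0: "0 \<le> M" unfolding M_def norm_inf_vec_def by (intro Max_ge[OF finM]) auto
  define \<delta> where "\<delta> = Min {\<bar>xs $ i\<bar> | i. i \<in> Ss}"
  have setD: "{\<bar>xs $ i\<bar> | i. i \<in> Ss} = (\<lambda>i. \<bar>xs $ i\<bar>) ` Ss" by auto
  have Ssne: "Ss \<noteq> {}" using c1 by auto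
  have dle: "\<delta> \<le> \<bar>xs $ i\<bar>" if "i \<in> Ss" for i
    unfolding \<delta>_def setD using that finSs by (intro Min_le) auto
  have "\<delta> \<in> (\<lambda>i. \<bar>xs $ i\<bar>) ` Ss" unfolding \<delta>_def setD using finSs Ssne by (intro Min_in) auto
  then have dpos: "\<delta> > 0" using xsnz by auto
  define K where "K = 1 + 2 * M / (\<eta> * \<delta>)"
  have K0: "K \<ge> 0" unfolding K_def using M0 eta dpos by simp
  define X where "X = sea_X xs Ss k \<eta> X0"
  define c where "c = cnt xs Ss k \<eta> X0"
  have dX: "dim_vec (X t) = n" for t unfolding X_def by (rule dimX[OF dX0 dxs])
  have inv: "\<forall>i\<in>Ss. c i t \<le> K" for t
  proof (induction t)
    case 0 then show ?case unfolding c_def cnt_def K_def using M0 eta dpos by simp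
  next
    case (Suc t)
    show ?case
    proof
      fix i assume i: "i \<in> Ss"
      have iN: "i < n" using i Ssn by auto
      show "c i (Suc t) \<le> K"
      proof (cases "i \<in> largest k (X t)")
        case True
        then show ?thesis using Suc i unfolding c_def cnt_suc X_def by simp
      next
        case False
        obtain j where j: "j < n" "j \<notin> Ss" "\<bar>X t $ i\<bar> \<le> \<bar>X t $ j\<bar>"
          using beaten[OF dX Ssn ck i False] by blast
        have "X t $ j = X0 $ j" unfolding X_def by (rule X_out[OF dX0 dxs j(1,2)])
        then have Xi: "\<bar>X t $ i\<bar> \<le> M" using j(3) Mge[OF j(1)] by simp
        have Xiform: "X t $ i = X0 $ i + c i t * \<eta> * xs $ i"
          unfolding X_def c_def by (rule X_in[OF dX0 dxs iN i])
        have cn: "c i t \<ge> 0" unfolding c_def by (rule cnt_nonneg)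
        have "\<bar>c i t * \<eta> * xs $ i\<bar> \<le> 2 * M" using Xi Xiform Mge[OF iN] by linarith
        moreover have "\<bar>c i t * \<eta> * xs $ i\<bar> = c i t * \<eta> * \<bar>xs $ i\<bar>" using cn eta by (simp add: abs_mult)
        moreover have "c i t * \<eta> * \<delta> \<le> c i t * \<eta> * \<bar>xs $ i\<bar>"
          using dle[OF i] cn eta by (simp add: mult_left_mono)
        ultimately have "c i t * (\<eta> * \<delta>) \<le> 2 * M" by (simp add: mult.assoc)
        then have "c i t \<le> 2 * M / (\<eta> * \<delta>)" using eta dpos by (simp add: pos_le_divide_eq)
        moreover have "c i (Suc t) = c i t + 1" using False unfolding c_def cnt_suc X_def by simp
        ultimately show ?thesis unfolding K_def by simp
      qed
    qed
  qed
  have prog: "real t \<le> (\<Sum>i\<in>Ss. c i t)" if np: "\<forall>s<t. \<not> Ss \<subseteq> largest k (X s)" for t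
  proof -
    have "(\<Sum>i\<in>Ss. c i t) = (\<Sum>s<t. \<Sum>i\<in>Ss. (if i \<notin> largest k (X s) then 1 else 0 :: real))"
      unfolding c_def cnt_def X_def by (rule sum.swap)
    moreover have "(1::real) \<le> (\<Sum>i\<in>Ss. (if i \<notin> largest k (X s) then 1 else 0 :: real))" if s: "s < t" for s
    proof -
      obtain i0 where i0: "i0 \<in> Ss" "i0 \<notin> largest k (X s)" using np s by blast
      have "(if i0 \<notin> largest k (X s) then 1 else 0 :: real) \<le> (\<Sum>i\<in>Ss. (if i \<notin> largest k (X s) then 1 else 0 :: real))"
        by (rule member_le_sum) (use i0 finSs in auto)
      then show ?thesis using i0 by simp
    qed
    then have "(\<Sum>s<t. (1::real)) \<le> (\<Sum>s<t. \<Sum>i\<in>Ss. (if i \<notin> largest k (X s) then 1 else 0 :: real))"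
      by (intro sum_mono) auto
    ultimately show ?thesis by simp
  qed
  have bnd: "(\<Sum>i\<in>Ss. c i t) \<le> real k * K" for t
  proof -
    have "(\<Sum>i\<in>Ss. c i t) \<le> of_nat (card Ss) * K" by (rule sum_bounded_above) (use inv in auto)
    also have "\<dots> \<le> real k * K" using ck K0 by (intro mult_right_mono) auto
    finally show ?thesis .
  qed
  have ueq: "sea_u xs Ss k \<eta> X0 t = 0\<^sub>v n \<longleftrightarrow> Ss \<subseteq> largest k (X t)" for t
    unfolding X_def by (rule u_zero_iff[OF dxs eta SsD])
  have ex: "\<exists>t. sea_u xs Ss k \<eta> X0 t = 0\<^sub>v n"
  proof (rule ccontr)
    assume "\<not> ?thesis"
    then have np: "\<forall>s<T. \<not> Ss \<subseteq> largest k (X s)" for T using ueq by blast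
    define T where "T = nat \<lceil>real k * K\<rceil> + 1"
    have "real T > real k * K" unfolding T_def by linarith
    moreover have "real T \<le> real k * K" using prog[of T, OF np] bnd[of T] by linarith
    ultimately show False by simp
  qed
  define ts where "ts = (LEAST t. sea_u xs Ss k \<eta> X0 t = 0\<^sub>v n)"
  have u0: "sea_u xs Ss k \<eta> X0 ts = 0\<^sub>v n" unfolding ts_def using ex by (rule LeastI_ex)
  have before: "\<forall>s<ts. \<not> Ss \<subseteq> largest k (X s)"
    using not_less_Least[of _ "\<lambda>t. sea_u xs Ss k \<eta> X0 t = 0\<^sub>v n"] ueq unfolding ts_def by blast
  have tsb: "real ts \<le> real k * K" using prog[OF before] bnd[of ts] by linarith
  have sub: "Ss \<subseteq> sea_S xs Ss k \<eta> X0 ts" using u0 ueq unfolding sea_S_def X_def by blast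
  have yc: "y \<in> carrier_vec m" unfolding yD using A xsc assms(6) by simp
  have Sn: "sea_S xs Ss k \<eta> X0 ts \<subseteq> {..<n}" unfolding sea_S_def largest_def using dX[of ts] X_def by auto
  have out: "sea_output xs Ss k \<eta> y A X0 = pinv_sol A y (sea_S xs Ss k \<eta> X0 ts)"
    unfolding sea_output_def ts_def dxs ..
  have "sea_output xs Ss k \<eta> y A X0 \<in> ls_argmin A y (sea_S xs Ss k \<eta> X0 ts)"
    unfolding out by (rule output_ls[OF A yc Sn])
  then show ?thesis using tsb sub u0 unfolding K_def M_def \<delta>_def by blast
qed

end
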